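(* Let $\Omega=[-1,1]$, let $\Pi_3(\mathbb{R}^1)$ be the space of real polynomials in one variable of degree at most $3$, and let $T:\mathbb{R}\to\mathbb{R}^3$, $T(x)=(x,x^2,x^3)$. Let $P:C[-1,1]\to\Pi_3(\mathbb{R}^1)$ be the interpolation projector with the regular nodes $-1,-\frac13,\frac13,1$, and let $S\subset\mathbb{R}^3$ be the tetrahedron with vertices $T(-1),T(-\frac13),T(\frac13),T(1)$. Then $$\xi(T(\Omega);S)=\frac{4}{2}\left(\|P\|_\Omega-1\right)+1=2\|P\|_\Omega-1.$$
   Context: For a nondegenerate simplex $S\subset\mathbb{R}^m$ and $\sigma>0$, $\sigma S$ denotes the image of $S$ under the homothety with center at the center of gravity of $S$ and ratio $\sigma$. For a closed bounded set $K\subset\mathbb{R}^m$, $\xi(K;S):=\min\{\sigma\ge 1: K\subset\sigma S\}$. The interpolation projector $P$ with distinct nodes $x^{(1)},\dots,x^{(4)}\in\Omega$ onto $\Pi_3(\mathbb{R}^1)$ is defined by $Pf\in\Pi_3(\mathbb{R}^1)$, $Pf(x^{(j)})=f(x^{(j)})$ for all $j$; $\|P\|_\Omega$ is its operator norm as a map $C(\Omega)\to C(\Omega)$ with the uniform norm. *)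

theory Defs
  imports "HOL-Analysis.Analysis" "HOL-Computational_Algebra.Polynomial"
begin

definition simplex_center :: "'a::real_vector list \<Rightarrow> 'a" where
  "simplex_center V = (1 / real (length V)) *\<^sub>R sum_list V"

definition simplex_of :: "'a::real_vector list \<Rightarrow> 'a set" where
  "simplex_of V = convex hull (set V)"

definition scaled_simplex :: "real \<Rightarrow> 'a::real_vector list \<Rightarrow> 'a set" where
  "scaled_simplex \<sigma> V =
     (\<lambda>y. simplex_center V + \<sigma> *\<^sub>R (y - simplex_center V)) ` simplex_of V"

definition xi :: "'a::real_vector set \<Rightarrow> 'a list \<Rightarrow> real" where
  "xi K V = Inf {\<sigma>. \<sigma> \<ge> 1 \<and> K \<subseteq> scaled_simplex \<sigma> V}"

definition interp_proj :: "nat \<Rightarrow> real list \<Rightarrow> (real \<Rightarrow> real) \<Rightarrow> real poly" where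
  "interp_proj n nodes f = (THE p. degree p \<le> n \<and> (\<forall>x\<in>set nodes. poly p x = f x))"

definition proj_norm :: "real set \<Rightarrow> nat \<Rightarrow> real list \<Rightarrow> real" where
  "proj_norm \<Omega> n nodes =
     Sup {(SUP x\<in>\<Omega>. \<bar>poly (interp_proj n nodes f) x\<bar>) | f.
            continuous_on \<Omega> f \<and> (\<forall>x\<in>\<Omega>. \<bar>f x\<bar> \<le> 1)}"

definition moment_curve3 :: "real \<Rightarrow> real^3" where
  "moment_curve3 x = vector [x, x^2, x^3]"

end

theory Submission
  imports Defs
begin


definition p0 :: "real poly" where "p0 = [:-1/16, 1/16, 9/16, -9/16:]"
definition p1 :: "real poly" where "p1 = [:9/16, -27/16, -9/16, 27/16:]"
definition p2 :: "real poly" where "p2 = [:9/16, 27/16, -9/16, -27/16:]"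
definition p3 :: "real poly" where "p3 = [:-1/16, -1/16, 9/16, 9/16:]"

definition L0 :: "real \<Rightarrow> real" where "L0 x = -(9/16)*(x^2-1/9)*(x-1)"
definition L1 :: "real \<Rightarrow> real" where "L1 x = (27/16)*(x^2-1)*(x-1/3)"
definition L2 :: "real \<Rightarrow> real" where "L2 x = -(27/16)*(x^2-1)*(x+1/3)"
definition L3 :: "real \<Rightarrow> real" where "L3 x = (9/16)*(x^2-1/9)*(x+1)"

lemma polyL: "poly p0 x = L0 x" "poly p1 x = L1 x" "poly p2 x = L2 x" "poly p3 x = L3 x"
  by (simp_all add: p0_def p1_def p2_def p3_def L0_def L1_def L2_def L3_def field_simps power2_eq_square power3_eq_cube)

lemma Lnodes:
  "L0 (-1) = 1" "L0 (-1/3) = 0" "L0 (1/3) = 0" "L0 1 = 0"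
  "L1 (-1) = 0" "L1 (-1/3) = 1" "L1 (1/3) = 0" "L1 1 = 0"
  "L2 (-1) = 0" "L2 (-1/3) = 0" "L2 (1/3) = 1" "L2 1 = 0"
  "L3 (-1) = 0" "L3 (-1/3) = 0" "L3 (1/3) = 0" "L3 1 = 1"
  by (simp_all add: L0_def L1_def L2_def L3_def power2_eq_square)

lemma Lnodes2:
  "L0 (-(1/3)) = 0" "L1 (-(1/3)) = 1" "L2 (-(1/3)) = 0" "L3 (-(1/3)) = 0"
  by (simp_all add: L0_def L1_def L2_def L3_def power2_eq_square)

definition Q :: "(real \<Rightarrow> real) \<Rightarrow> real poly" where
  "Q f = smult (f (-1)) p0 + smult (f (-1/3)) p1 + smult (f (1/3)) p2 + smult (f 1) p3"

lemma polyQ: "poly (Q f) x = f (-1) * L0 x + f (-1/3) * L1 x + f (1/3) * L2 x + f 1 * L3 x"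
  by (simp add: Q_def polyL)

lemma degQ: "degree (Q f) \<le> 3"
  unfolding Q_def p0_def p1_def p2_def p3_def
  by (intro degree_add_le degree_smult_le[THEN order.trans]) auto

lemma interp: "interp_proj 3 [-1, -1/3, 1/3, 1] f = Q f"
  unfolding interp_proj_def
proof (rule the_equality)
  show "degree (Q f) \<le> 3 \<and> (\<forall>x\<in>set [-1, -1/3, 1/3, 1::real]. poly (Q f) x = f x)"
    using degQ by (auto simp: polyQ Lnodes Lnodes2)
next
  fix p assume h: "degree p \<le> 3 \<and> (\<forall>x\<in>set [-1, -1/3, 1/3, 1::real]. poly p x = f x)"
  show "p = Q f"
  proof (rule poly_eqI_degree[where A="{-1, -1/3, 1/3, 1}"])
    fix x assume "x \<in> {-1, -1/3, 1/3, 1::real}"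
    then have "x = -1 \<or> x = -(1/3) \<or> x = 1/3 \<or> x = 1" by fastforce
    then show "poly p x = poly (Q f) x" using h by (elim disjE; hypsubst_thin; simp add: polyQ Lnodes Lnodes2)
  next
    show "degree p < card {-1, -1/3, 1/3, 1::real}" using h by simp
    show "degree (Q f) < card {-1, -1/3, 1/3, 1::real}" using degQ[of f] by simp
  qed
qed



definition aa :: real where "aa = (1 + 2 * sqrt 7)/9"
definition g :: "real \<Rightarrow> real" where "g x = (1-x^2)*(x-1/3)"
definition MM :: real where "MM = 27/16 * g aa"

lemma aa_eq: "9*aa^2 = 2*aa+3"
proof -
  have "sqrt 7 ^2 = 7" by simp
  then show ?thesis unfolding aa_def by (simp add: power2_eq_square field_simps) 
qed

lemma aa_bnd: "2/3 \<le> aa" "aa \<le> 1"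
proof -
  have "5/2 \<le> sqrt 7" by (rule real_le_rsqrt) (simp add: power2_eq_square)
  moreover have "sqrt 7 \<le> 4" by (rule real_sqrt_le_iff[THEN iffD2, of 7 16, simplified])
  ultimately show "2/3 \<le> aa" "aa \<le> 1" unfolding aa_def by simp_all
qed

lemma g_ident: "g aa - g x = (x-aa)^2*(x-1/3+2*aa)"
proof -
  have h: "9*aa^2 = 2*aa+3" by (rule aa_eq)
  have "g aa - g x - (x-aa)^2*(x-1/3+2*aa) = (9*aa^2-2*aa-3)*(x-aa)/3"
    unfolding g_def by (simp add: field_simps power2_eq_square power3_eq_cube)
  then show ?thesis using h by simp
qed

lemma g_le: "x \<ge> -1 \<Longrightarrow> g x \<le> g aa"
proof -
  assume "x \<ge> -1"
  then have "0 \<le> (x-aa)^2*(x-1/3+2*aa)" using aa_bnd by (intro mult_nonneg_nonneg) auto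
  then show ?thesis using g_ident[of x] by simp
qed

lemma MM_ge: "MM \<ge> 5/16"
proof -
  have "g (2/3) \<le> g aa" by (rule g_le) simp
  then show ?thesis unfolding MM_def g_def by (simp add: power2_eq_square)
qed

lemma L1g: "L1 x = -(27/16) * g x" by (simp add: L1_def g_def field_simps power2_eq_square)
lemma L2g: "L2 x = -(27/16) * g (-x)" by (simp add: L2_def g_def field_simps power2_eq_square)

lemma L0a: "L0 x = (9/16) * (x^2 - 1/9) * (1 - x)" by (simp add: L0_def field_simps power2_eq_square)
lemma L3a: "L3 x = (9/16) * (x^2 - 1/9) * (x + 1)" by (simp add: L3_def field_simps power2_eq_square)
lemma L1a: "L1 x = (27/16) * (1 - x^2) * (1/3 - x)" by (simp add: L1_def field_simps power2_eq_square)
lemma L2a: "L2 x = (27/16) * (1 - x^2) * (x + 1/3)" by (simp add: L2_def field_simps power2_eq_square)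

lemma sq1: "\<bar>x::real\<bar> \<le> 1 \<Longrightarrow> x^2 \<le> 1"
  by (simp add: abs_square_le_1)
lemma sq2: "1/3 \<le> \<bar>x::real\<bar> \<Longrightarrow> 1/9 \<le> x^2"
proof -
  assume "1/3 \<le> \<bar>x\<bar>"
  then have "(1/3)^2 \<le> \<bar>x\<bar>^2" by (rule power_mono) simp
  then show ?thesis by (simp add: power2_eq_square)
qed
lemma sq3: "\<bar>x::real\<bar> \<le> 1/3 \<Longrightarrow> x^2 \<le> 1/9"
proof -
  assume "\<bar>x\<bar> \<le> 1/3"
  then have "\<bar>x\<bar>^2 \<le> (1/3)^2" by (rule power_mono) simp
  then show ?thesis by (simp add: power2_eq_square)
qed

lemma L0_ge: "-1 \<le> x \<Longrightarrow> x \<le> 1 \<Longrightarrow> L0 x \<ge> -1/8"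
proof -
  assume h: "-1 \<le> x" "x \<le> 1"
  have "(1/9 - x^2) * (1 - x) \<le> (1/9) * 2"
    using h by (intro mult_mono) auto
  moreover have "(9/16) * (x^2 - 1/9) * (1 - x) = -(9/16) * ((1/9 - x^2) * (1 - x))" by (simp add: field_simps power2_eq_square)
  ultimately show ?thesis unfolding L0a by linarith
qed

lemma L3_ge: "-1 \<le> x \<Longrightarrow> x \<le> 1 \<Longrightarrow> L3 x \<ge> -1/8"
proof -
  assume h: "-1 \<le> x" "x \<le> 1"
  have "(1/9 - x^2) * (x + 1) \<le> (1/9) * 2"
    using h by (intro mult_mono) auto
  moreover have "(9/16) * (x^2 - 1/9) * (x + 1) = -(9/16) * ((1/9 - x^2) * (x + 1))" by (simp add: field_simps power2_eq_square)
  ultimately show ?thesis unfolding L3a by linarith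
qed

lemma L1_ge: "-1 \<le> x \<Longrightarrow> L1 x \<ge> - MM"
  using g_le[of x] unfolding L1g MM_def by simp

lemma L2_ge: "x \<le> 1 \<Longrightarrow> L2 x \<ge> - MM"
  using g_le[of "-x"] unfolding L2g MM_def by simp

lemma Lsum: "L0 x + L1 x + L2 x + L3 x = 1"
  by (simp add: L0_def L1_def L2_def L3_def field_simps power2_eq_square)
lemma Lmom1: "L0 x * (-1) + L1 x * (-1/3) + L2 x * (1/3) + L3 x * 1 = x"
  by (simp add: L0_def L1_def L2_def L3_def field_simps power2_eq_square)
lemma Lmom2: "L0 x * (-1)^2 + L1 x * (-1/3)^2 + L2 x * (1/3)^2 + L3 x * 1^2 = x^2"
  by (simp add: L0_def L1_def L2_def L3_def field_simps power2_eq_square)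
lemma Lmom3: "L0 x * (-1)^3 + L1 x * (-1/3)^3 + L2 x * (1/3)^3 + L3 x * 1^3 = x^3"
  by (simp add: L0_def L1_def L2_def L3_def field_simps power2_eq_square power3_eq_cube)

lemma sum_abs: "-1 \<le> x \<Longrightarrow> x \<le> 1 \<Longrightarrow> \<bar>L0 x\<bar> + \<bar>L1 x\<bar> + \<bar>L2 x\<bar> + \<bar>L3 x\<bar> \<le> 1 + 2 * MM"
proof -
  assume h: "-1 \<le> x" "x \<le> 1"
  have x1: "x^2 \<le> 1" using h by (intro sq1) auto
  consider "1/3 \<le> x" | "x \<le> -1/3" | "-1/3 \<le> x" "x \<le> 1/3" by linarith
  then show ?thesis
  proof cases
    case 1
    have s: "1/9 \<le> x^2" using 1 by (intro sq2) auto
    have "L0 x \<ge> 0" unfolding L0a using s h by (intro mult_nonneg_nonneg) auto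
    moreover have "L2 x \<ge> 0" unfolding L2a using x1 1 by (intro mult_nonneg_nonneg) auto
    moreover have "L3 x \<ge> 0" unfolding L3a using s h by (intro mult_nonneg_nonneg) auto
    moreover have "L1 x \<le> 0" unfolding L1a using x1 1 by (intro mult_nonneg_nonpos) auto
    ultimately show ?thesis using Lsum[of x] L1_ge[of x] h by simp
  next
    case 2
    have s: "1/9 \<le> x^2" using 2 by (intro sq2) auto
    have "L0 x \<ge> 0" unfolding L0a using s h by (intro mult_nonneg_nonneg) auto
    moreover have "L1 x \<ge> 0" unfolding L1a using x1 2 by (intro mult_nonneg_nonneg) auto
    moreover have "L3 x \<ge> 0" unfolding L3a using s h by (intro mult_nonneg_nonneg) auto
    moreover have "L2 x \<le> 0" unfolding L2a using x1 2 by (intro mult_nonneg_nonpos) auto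
    ultimately show ?thesis using Lsum[of x] L2_ge[of x] h by simp
  next
    case 3
    have s: "x^2 \<le> 1/9" using 3 by (intro sq3) auto
    have "L1 x \<ge> 0" unfolding L1a using x1 3 by (intro mult_nonneg_nonneg) auto
    moreover have "L2 x \<ge> 0" unfolding L2a using x1 3 by (intro mult_nonneg_nonneg) auto
    moreover have "L0 x \<le> 0" unfolding L0a by (rule mult_nonpos_nonneg) (use s h in auto)
    moreover have "L3 x \<le> 0" unfolding L3a by (rule mult_nonpos_nonneg) (use s h in auto)
    ultimately show ?thesis using Lsum[of x] L0_ge[of x] L3_ge[of x] h MM_ge by simp
  qed
qed

lemma at_aa: "L1 aa = - MM" "L0 aa \<ge> 0" "L2 aa \<ge> 0" "L3 aa \<ge> 0"
proof -
  show "L1 aa = - MM" unfolding L1g MM_def by simp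
  have h: "1/3 \<le> aa" "aa \<le> 1" using aa_bnd by auto
  have x1: "aa^2 \<le> 1" using h by (intro sq1) auto
  have s: "1/9 \<le> aa^2" using h by (intro sq2) auto
  show "L0 aa \<ge> 0" unfolding L0a using s h by (intro mult_nonneg_nonneg) auto
  show "L2 aa \<ge> 0" unfolding L2a using x1 h by (intro mult_nonneg_nonneg) auto
  show "L3 aa \<ge> 0" unfolding L3a using s h by (intro mult_nonneg_nonneg) auto
qed



lemma Tc [simp]: "moment_curve3 x $ 1 = x" "moment_curve3 x $ 2 = x^2" "moment_curve3 x $ 3 = x^3"
  by (simp_all add: moment_curve3_def)

definition fs :: "real \<Rightarrow> real" where "fs x = min 1 (3/2 * \<bar>3*x+1\<bar> - 1)"

lemma fs_vals: "fs (-1) = 1" "fs (-1/3) = -1" "fs (1/3) = 1" "fs 1 = 1"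
  by (simp_all add: fs_def)

lemma fs_cont: "continuous_on {-1..1} fs"
  unfolding fs_def by (intro continuous_intros)

lemma fs_bnd: "\<bar>fs x\<bar> \<le> 1" unfolding fs_def abs_le_iff min_def using abs_ge_zero[of "3*x+1"] by auto

lemma Qbound:
  assumes f: "\<forall>x\<in>{-1..1}. \<bar>f x\<bar> \<le> (1::real)" and x: "x \<in> {-1..1}"
  shows "\<bar>poly (Q f) x\<bar> \<le> 1 + 2 * MM"
proof -
  have fb: "\<bar>f (-1)\<bar> \<le> 1" "\<bar>f (-1/3)\<bar> \<le> 1" "\<bar>f (1/3)\<bar> \<le> 1" "\<bar>f 1\<bar> \<le> 1"
    using f by auto
  have t: "\<bar>c * l\<bar> \<le> \<bar>l\<bar>" if "\<bar>c\<bar> \<le> 1" for c l :: real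
    using that by (simp add: abs_mult mult_left_le_one_le)
  have "\<bar>poly (Q f) x\<bar> \<le> \<bar>f (-1) * L0 x\<bar> + \<bar>f (-1/3) * L1 x\<bar> + \<bar>f (1/3) * L2 x\<bar> + \<bar>f 1 * L3 x\<bar>"
    unfolding polyQ by (rule order.trans[OF abs_triangle_ineq add_right_mono] order.trans[OF abs_triangle_ineq add_right_mono] abs_triangle_ineq)+
  also have "\<dots> \<le> \<bar>L0 x\<bar> + \<bar>L1 x\<bar> + \<bar>L2 x\<bar> + \<bar>L3 x\<bar>"
    using t[OF fb(1), of "L0 x"] t[OF fb(2), of "L1 x"] t[OF fb(3), of "L2 x"] t[OF fb(4), of "L3 x"] by linarith
  also have "\<dots> \<le> 1 + 2 * MM" using x sum_abs[of x] by auto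
  finally show ?thesis .
qed

lemma Qfs_aa: "poly (Q fs) aa = 1 + 2 * MM"
  using at_aa Lsum[of aa] unfolding polyQ fs_vals by simp

lemma proj_norm_val: "proj_norm {-1..1} 3 [-1, -1/3, 1/3, 1] = 1 + 2 * MM"
  unfolding proj_norm_def interp
proof (rule cSup_eq_maximum)
  have "(SUP x\<in>{-1..1}. \<bar>poly (Q fs) x\<bar>) = 1 + 2 * MM"
  proof (rule antisym)
    show "(SUP x\<in>{-1..1}. \<bar>poly (Q fs) x\<bar>) \<le> 1 + 2 * MM"
      by (rule cSUP_least) (auto intro: Qbound fs_bnd)
    have "aa \<in> {-1..1}" using aa_bnd by auto
    moreover have "bdd_above ((\<lambda>x. \<bar>poly (Q fs) x\<bar>) ` {-1..1})"
      by (rule bdd_aboveI2[where M="1 + 2 * MM"]) (auto intro: Qbound fs_bnd)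
    ultimately have "\<bar>poly (Q fs) aa\<bar> \<le> (SUP x\<in>{-1..1}. \<bar>poly (Q fs) x\<bar>)"
      by (rule cSUP_upper)
    then show "1 + 2 * MM \<le> (SUP x\<in>{-1..1}. \<bar>poly (Q fs) x\<bar>)"
      using Qfs_aa by simp
  qed
  then show "1 + 2 * MM \<in> {SUP x\<in>{-1..1}. \<bar>poly (Q f) x\<bar> |f. continuous_on {-1..1} f \<and> (\<forall>x\<in>{-1..1}. \<bar>f x\<bar> \<le> 1)}"
    using fs_cont fs_bnd by force
next
  fix y assume "y \<in> {SUP x\<in>{-1..1}. \<bar>poly (Q f) x\<bar> |f. continuous_on {-1..1} f \<and> (\<forall>x\<in>{-1..1}. \<bar>f x\<bar> \<le> 1)}"
  then obtain f where "y = (SUP x\<in>{-1..1}. \<bar>poly (Q f) x\<bar>)" "\<forall>x\<in>{-1..1}. \<bar>f x\<bar> \<le> (1::real)" by auto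
  then show "y \<le> 1 + 2 * MM" by (auto intro!: cSUP_least Qbound)
qed



abbreviation VV :: "(real^3) list" where
  "VV \<equiv> [moment_curve3 (-1), moment_curve3 (-1/3), moment_curve3 (1/3), moment_curve3 1]"

lemma center_eq: "simplex_center VV = vector [0, 5/9, 0]"
  unfolding simplex_center_def
  by (simp add: vec_eq_iff forall_3 power2_eq_square power3_eq_cube)

lemma comb:
  fixes w0 w1 w2 w3 s r c v0 v1 v2 v3 t :: real
  assumes "s * r = 1" "w0+w1+w2+w3 = 1" "c = (v0+v1+v2+v3)/4" "t = w0 * v0 + w1 * v1 + w2 * v2 + w3 * v3"
  shows "t = c + s * ((1/4 + (w0-1/4) * r) * v0 + (1/4 + (w1-1/4) * r) * v1
                     + (1/4 + (w2-1/4) * r) * v2 + (1/4 + (w3-1/4) * r) * v3 - c)"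
proof -
  have "(1/4 + (w0-1/4) * r) * v0 + (1/4 + (w1-1/4) * r) * v1
                     + (1/4 + (w2-1/4) * r) * v2 + (1/4 + (w3-1/4) * r) * v3 = c + r * (t - c)"
    unfolding assms(3,4) by (simp add: field_simps)
  then have "c + s * ((1/4 + (w0-1/4) * r) * v0 + (1/4 + (w1-1/4) * r) * v1
                     + (1/4 + (w2-1/4) * r) * v2 + (1/4 + (w3-1/4) * r) * v3 - c) = c + (s * r) * (t - c)"
    by (simp add: mult.assoc)
  then show ?thesis using assms(1) by simp
qed

lemma lam_nonneg:
  assumes "y \<in> convex hull (set VV)"
  shows "9/16 - 27/16 * y$1 - 9/16 * y$2 + 27/16 * y$3 \<ge> 0"
proof -
  let ?H = "{z::real^3. 9/16 - 27/16 * z$1 - 9/16 * z$2 + 27/16 * z$3 \<ge> 0}"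
  have "convex ?H"
  proof (rule convexI)
    fix x y :: "real^3" and u v :: real
    assume "x \<in> ?H" "y \<in> ?H" "0 \<le> u" "0 \<le> v" "u + v = 1"
    then have hx: "0 \<le> 9/16 - 27/16 * x$1 - 9/16 * x$2 + 27/16 * x$3"
      and hy: "0 \<le> 9/16 - 27/16 * y$1 - 9/16 * y$2 + 27/16 * y$3" by auto
    have "0 \<le> u * (9/16 - 27/16 * x$1 - 9/16 * x$2 + 27/16 * x$3)
                 + v * (9/16 - 27/16 * y$1 - 9/16 * y$2 + 27/16 * y$3)"
      using mult_nonneg_nonneg[OF \<open>0 \<le> u\<close> hx] mult_nonneg_nonneg[OF \<open>0 \<le> v\<close> hy] by linarith
    also have "\<dots> = 9/16 - 27/16 * (u *\<^sub>R x + v *\<^sub>R y)$1 - 9/16 * (u *\<^sub>R x + v *\<^sub>R y)$2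
                 + 27/16 * (u *\<^sub>R x + v *\<^sub>R y)$3"
    proof -
      have "v = 1 - u" using \<open>u + v = 1\<close> by simp
      then show ?thesis by (simp add: field_simps)
    qed
    finally show "u *\<^sub>R x + v *\<^sub>R y \<in> ?H" by simp
  qed
  moreover have "set VV \<subseteq> ?H" by (simp add: power2_eq_square power3_eq_cube)
  ultimately have "convex hull (set VV) \<subseteq> ?H" by (rule hull_minimal[rotated])
  then show ?thesis using assms by auto
qed



lemma mu_nonneg:
  assumes "l \<ge> - MM"
  shows "0 \<le> 1/4 + (l - 1/4) * (1 / (1 + 4*MM))"
proof -
  have p: "1 + 4*MM > 0" using MM_ge by simp
  have "(1 + 4*MM)/4 = 1/4 + MM" by simp
  then have "0 \<le> (1 + 4*MM)/4 + (l - 1/4)" using assms by linarith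
  then have "0 \<le> ((1 + 4*MM)/4 + (l - 1/4)) / (1 + 4*MM)" using p by simp
  also have "\<dots> = 1/4 + (l - 1/4) * (1 / (1 + 4*MM))" using p by (simp add: field_simps)
  finally show ?thesis .
qed

lemma xi_val: "xi (moment_curve3 ` {-1..1}) VV = 1 + 4 * MM"
  unfolding xi_def
proof (rule cInf_eq_minimum)
  define s where "s = 1 + 4 * MM"
  define r where "r = 1 / s"
  have sr: "s * r = 1" using MM_ge by (simp add: s_def r_def)
  have "moment_curve3 ` {-1..1} \<subseteq> scaled_simplex s VV"
  proof
    fix z assume "z \<in> moment_curve3 ` {-1..1}"
    then obtain x where x: "x \<in> {-1..1}" and z: "z = moment_curve3 x" by auto
    define m0 where "m0 = 1/4 + (L0 x - 1/4) * r"
    define m1 where "m1 = 1/4 + (L1 x - 1/4) * r"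
    define m2 where "m2 = 1/4 + (L2 x - 1/4) * r"
    define m3 where "m3 = 1/4 + (L3 x - 1/4) * r"
    define y where "y = m0 *\<^sub>R moment_curve3 (-1) + m1 *\<^sub>R moment_curve3 (-1/3)
       + m2 *\<^sub>R moment_curve3 (1/3) + m3 *\<^sub>R moment_curve3 1"
    have "y \<in> simplex_of VV"
    proof -
      let ?m = "\<lambda>i::nat. [m0, m1, m2, m3] ! i"
      let ?v = "\<lambda>i::nat. VV ! i"
      have "(\<Sum>i\<in>{0,1,2,3}. ?m i *\<^sub>R ?v i) \<in> convex hull (set VV)"
      proof (rule convex_sum)
        show "finite {0::nat,1,2,3}" by simp
        show "convex (convex hull (set VV))" by (rule convex_convex_hull)
        show "sum ?m {0,1,2,3} = 1"
        proof -
          have "r * (L0 x + L1 x + L2 x + L3 x) = r" using Lsum[of x] by simp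
          then show ?thesis by (simp add: m0_def m1_def m2_def m3_def algebra_simps)
        qed
        have lb: "L0 x \<ge> -MM" "L1 x \<ge> -MM" "L2 x \<ge> -MM" "L3 x \<ge> -MM"
          using x L0_ge[of x] L3_ge[of x] L1_ge[of x] L2_ge[of x] MM_ge by auto
        have "m0 \<ge> 0" unfolding m0_def r_def s_def by (rule mu_nonneg[OF lb(1)])
        moreover have "m1 \<ge> 0" unfolding m1_def r_def s_def by (rule mu_nonneg[OF lb(2)])
        moreover have "m2 \<ge> 0" unfolding m2_def r_def s_def by (rule mu_nonneg[OF lb(3)])
        moreover have "m3 \<ge> 0" unfolding m3_def r_def s_def by (rule mu_nonneg[OF lb(4)])
        ultimately
        show "\<And>i. i \<in> {0,1,2,3} \<Longrightarrow> 0 \<le> ?m i" by auto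
        show "\<And>i. i \<in> {0,1,2,3} \<Longrightarrow> ?v i \<in> convex hull (set VV)"
          by (rule hull_inc) auto
      qed
      moreover have "(\<Sum>i\<in>{0,1,2,3}. ?m i *\<^sub>R ?v i) = y"
        by (simp add: y_def algebra_simps)
      ultimately show ?thesis by (simp add: simplex_of_def)
    qed
    moreover have "z = simplex_center VV + s *\<^sub>R (y - simplex_center VV)"
    proof -
      have c1: "x = 0 + s * (m0 * (-1) + m1 * (-1/3) + m2 * (1/3) + m3 * 1 - 0)"
        unfolding m0_def m1_def m2_def m3_def
        by (rule comb[OF sr Lsum]) (insert Lmom1[of x], simp_all, linarith?)
      have c2: "x^2 = 5/9 + s * (m0 * 1 + m1 * (1/9) + m2 * (1/9) + m3 * 1 - 5/9)"
        unfolding m0_def m1_def m2_def m3_def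
        by (rule comb[OF sr Lsum]) (insert Lmom2[of x], simp_all add: power2_eq_square, linarith?)
      have c3: "x^3 = 0 + s * (m0 * (-1) + m1 * (-1/27) + m2 * (1/27) + m3 * 1 - 0)"
        unfolding m0_def m1_def m2_def m3_def
        by (rule comb[OF sr Lsum]) (insert Lmom3[of x], simp_all add: power3_eq_cube, linarith?)
      have e1: "(simplex_center VV + s *\<^sub>R (y - simplex_center VV)) $ 1 = 0 + s * (m0 * (-1) + m1 * (-1/3) + m2 * (1/3) + m3 * 1 - 0)"
        unfolding center_eq by (simp add: y_def)
      have e2: "(simplex_center VV + s *\<^sub>R (y - simplex_center VV)) $ 2 = 5/9 + s * (m0 * 1 + m1 * (1/9) + m2 * (1/9) + m3 * 1 - 5/9)"
        unfolding center_eq by (simp add: y_def power2_eq_square)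
      have e3: "(simplex_center VV + s *\<^sub>R (y - simplex_center VV)) $ 3 = 0 + s * (m0 * (-1) + m1 * (-1/27) + m2 * (1/27) + m3 * 1 - 0)"
        unfolding center_eq by (simp add: y_def power3_eq_cube)
      show ?thesis
        unfolding vec_eq_iff forall_3 z Tc e1 e2 e3 by (intro conjI c1 c2 c3)
    qed
    ultimately show "z \<in> scaled_simplex s VV"
      unfolding scaled_simplex_def by blast
  qed
  then show "1 + 4 * MM \<in> {\<sigma>. 1 \<le> \<sigma> \<and> moment_curve3 ` {-1..1} \<subseteq> scaled_simplex \<sigma> VV}"
    using MM_ge by (simp add: s_def)
next
  fix \<sigma> assume "\<sigma> \<in> {\<sigma>. 1 \<le> \<sigma> \<and> moment_curve3 ` {-1..1} \<subseteq> scaled_simplex \<sigma> VV}"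
  then have s1: "1 \<le> \<sigma>" and sub: "moment_curve3 ` {-1..1} \<subseteq> scaled_simplex \<sigma> VV" by auto
  have "moment_curve3 aa \<in> moment_curve3 ` {-1..1}" using aa_bnd by auto
  with sub obtain y where y: "y \<in> simplex_of VV"
    and eq: "moment_curve3 aa = vector [0, 5/9, 0] + \<sigma> *\<^sub>R (y - vector [0, 5/9, 0])"
    unfolding scaled_simplex_def center_eq by blast
  define lam where "lam = 9/16 - 27/16 * y$1 - 9/16 * y$2 + 27/16 * y$3"
  have lam: "0 \<le> lam" unfolding lam_def using y lam_nonneg by (simp add: simplex_of_def)
  have q1: "aa = \<sigma> * y$1" using arg_cong[OF eq, of "\<lambda>v. v $ 1"] by simp
  have q2: "aa^2 = 5/9 + \<sigma> * (y$2 - 5/9)" using arg_cong[OF eq, of "\<lambda>v. v $ 2"] by simp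
  have q3: "aa^3 = \<sigma> * y$3" using arg_cong[OF eq, of "\<lambda>v. v $ 3"] by simp
  have "L1 aa = 9/16 - 27/16 * aa - 9/16 * aa^2 + 27/16 * aa^3"
    by (simp add: L1_def field_simps power2_eq_square power3_eq_cube)
  also have "\<dots> = 1/4 - \<sigma>/4 + \<sigma> * lam"
  proof -
    have "\<sigma> * lam = 9/16 * \<sigma> - 27/16 * (\<sigma> * y$1) - 9/16 * (\<sigma> * y$2) + 27/16 * (\<sigma> * y$3)"
      unfolding lam_def by (simp add: algebra_simps)
    moreover have "aa^2 = 5/9 + \<sigma> * y$2 - \<sigma> * (5/9)" using q2 by (simp add: algebra_simps)
    ultimately show ?thesis using q1 q3 by linarith
  qed
  finally have "- MM = 1/4 - \<sigma>/4 + \<sigma> * lam" using at_aa(1) by simp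
  moreover have "0 \<le> \<sigma> * lam" using s1 lam by simp
  ultimately show "1 + 4 * MM \<le> \<sigma>" by linarith
qed


theorem mainTheorem2:
  shows "xi (moment_curve3 ` {-1..1})
            [moment_curve3 (-1), moment_curve3 (-1/3), moment_curve3 (1/3), moment_curve3 1]
          = 4/2 * (proj_norm {-1..1} 3 [-1, -1/3, 1/3, 1] - 1) + 1
       \<and> 4/2 * (proj_norm {-1..1} 3 [-1, -1/3, 1/3, 1] - 1) + 1
          = 2 * proj_norm {-1..1} 3 [-1, -1/3, 1/3, 1] - 1"
  using xi_val proj_norm_val by simp

end
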